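(* For $\lambda>0$ let $N_\lambda$ be a Poisson random variable with parameter $\lambda$. Then $$\inf_{\lambda>0}P\left\{|N_\lambda-E[N_\lambda]|<\sqrt{\mathrm{Var}(N_\lambda)}\right\}=P\left\{|N_1-E[N_1]|<\sqrt{\mathrm{Var}(N_1)}\right\}=e^{-1}.$$ Consequently, with $\mathcal I_0$ the set of all infinitely divisible real random variables $X$ with $E[X^2]<\infty$ and $\mathrm{Var}(X)>0$, and $P_{\mathcal I_0}=\inf_{X\in\mathcal I_0}P\{|X-E[X]|<\sqrt{\mathrm{Var}(X)}\}$, we have $P_{\mathcal I_0}\le e^{-1}$.
   Context: A real random variable is infinitely divisible if for every $n\ge1$ its distribution equals that of a sum of $n$ i.i.d. random variables. *)

theory Defs
  imports "HOL-Probability.Probability"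
begin

text \<open>A law (Borel probability measure on the reals) is infinitely divisible if for every
  n \<ge> 1 it is the distribution of a sum of n i.i.d. real random variables; we use the
  canonical realisation of n i.i.d. variables with common law \<nu> as the coordinates of the
  product measure.\<close>
definition inf_divisible :: "real measure \<Rightarrow> bool" where
  "inf_divisible \<mu> \<longleftrightarrow> prob_space \<mu> \<and> sets \<mu> = sets borel \<and>
     (\<forall>n::nat\<ge>1. \<exists>\<nu>. prob_space \<nu> \<and> sets \<nu> = sets borel \<and>
        \<mu> = distr (PiM {..<n} (\<lambda>_. \<nu>)) borel (\<lambda>x. \<Sum>i<n. x i))"

definition poisson_conc :: "real \<Rightarrow> real" where
  "poisson_conc l = measure_pmf.prob (poisson_pmf l)
     {k. \<bar>real k - measure_pmf.expectation (poisson_pmf l) real\<bar>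
           < sqrt (measure_pmf.variance (poisson_pmf l) real)}"

definition I0 :: "real measure set" where
  "I0 = {\<mu>. inf_divisible \<mu> \<and> integrable \<mu> (\<lambda>x. x\<^sup>2) \<and>
              prob_space.variance \<mu> (\<lambda>x. x) > 0}"

definition P_I0 :: real where
  "P_I0 = Inf ((\<lambda>\<mu>. measure \<mu> {x. \<bar>x - prob_space.expectation \<mu> (\<lambda>x. x)\<bar>
                     < sqrt (prob_space.variance \<mu> (\<lambda>x. x))}) ` I0)"

end

theory Submission
  imports Defs
begin


lemma expectation_pmf_sums:
  fixes p :: "nat pmf" and f :: "nat \<Rightarrow> real"
  assumes s: "(\<lambda>k. pmf p k * f k) sums s" and nn: "\<And>k. f k \<ge> 0"
  shows "integrable (measure_pmf p) f" "measure_pmf.expectation p f = s"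
proof -
  have i: "integrable (count_space UNIV) (\<lambda>k. pmf p k * f k)"
    using s nn unfolding integrable_count_space_nat_iff by (simp add: sums_iff)
  then show "integrable (measure_pmf p) f"
    unfolding measure_pmf_eq_density by (subst integrable_density) (auto simp: mult_ac)
  have "measure_pmf.expectation p f = (\<integral>n. pmf p n * f n \<partial>count_space UNIV)"
    unfolding measure_pmf_eq_density by (subst integral_density) auto
  also have "\<dots> = s" using i s by (subst integral_count_space_nat) (simp_all add: sums_iff)
  finally show "measure_pmf.expectation p f = s" .
qed

lemma poisson_sums:
  fixes l :: real assumes l: "l > 0"
  shows "(\<lambda>k. pmf (poisson_pmf l) k) sums 1"
    and "(\<lambda>k. pmf (poisson_pmf l) k * real k) sums l"
    and "(\<lambda>k. pmf (poisson_pmf l) k * (real k)^2) sums (l^2 + l)"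
proof -
  have e: "(\<lambda>k. l^k / fact k) sums exp l"
    using exp_converges[of l] by (simp add: divide_inverse mult_ac scaleR_conv_of_real)
  show s0: "(\<lambda>k. pmf (poisson_pmf l) k) sums 1"
    using sums_mult2[OF e, of "exp (-l)"] l by (simp add: exp_minus field_simps)
  have s1': "(\<lambda>m. pmf (poisson_pmf l) (Suc m) * real (Suc m)) = (\<lambda>m. l * pmf (poisson_pmf l) m)"
  proof
    fix m
    have "pmf (poisson_pmf l) (Suc m) = l / real (Suc m) * pmf (poisson_pmf l) m"
      using l by (simp add: field_simps del: of_nat_Suc)
    then show "pmf (poisson_pmf l) (Suc m) * real (Suc m) = l * pmf (poisson_pmf l) m"
      by (simp del: of_nat_Suc)
  qed
  have "(\<lambda>m. pmf (poisson_pmf l) (Suc m) * real (Suc m)) sums (l * 1)"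
    unfolding s1' by (rule sums_mult[OF s0])
  then have "(\<lambda>k. pmf (poisson_pmf l) k * real k) sums (l * 1 + pmf (poisson_pmf l) 0 * real 0)"
    by (rule iffD1[OF sums_Suc_iff])
  then show s1: "(\<lambda>k. pmf (poisson_pmf l) k * real k) sums l" by simp
  have s2': "(\<lambda>m. pmf (poisson_pmf l) (Suc m) * (real (Suc m))^2) =
     (\<lambda>m. l * (pmf (poisson_pmf l) m * real m + pmf (poisson_pmf l) m))"
  proof
    fix m
    have "pmf (poisson_pmf l) (Suc m) = l / real (Suc m) * pmf (poisson_pmf l) m"
      using l by (simp add: field_simps del: of_nat_Suc)
    then show "pmf (poisson_pmf l) (Suc m) * (real (Suc m))^2 =
      l * (pmf (poisson_pmf l) m * real m + pmf (poisson_pmf l) m)"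
      by (simp add: power2_eq_square field_simps del: of_nat_Suc) (simp add: algebra_simps)
  qed
  have "(\<lambda>m. pmf (poisson_pmf l) (Suc m) * (real (Suc m))^2) sums (l * (l + 1))"
    unfolding s2' by (intro sums_mult sums_add s0 s1)
  then have "(\<lambda>k. pmf (poisson_pmf l) k * (real k)^2) sums (l * (l + 1) + pmf (poisson_pmf l) 0 * (real 0)^2)"
    by (rule iffD1[OF sums_Suc_iff])
  then show "(\<lambda>k. pmf (poisson_pmf l) k * (real k)^2) sums (l^2 + l)"
    by (simp add: algebra_simps power2_eq_square)
qed

lemma poisson_mean:
  fixes l :: real assumes l: "l > 0"
  shows "measure_pmf.expectation (poisson_pmf l) real = l"
  using expectation_pmf_sums(2)[OF poisson_sums(2)[OF l]] by simp

lemma poisson_var: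
  fixes l :: real assumes l: "l > 0"
  shows "measure_pmf.variance (poisson_pmf l) real = l"
proof -
  have "(\<lambda>k. pmf (poisson_pmf l) k * (real k - l)^2) =
     (\<lambda>k. pmf (poisson_pmf l) k * (real k)^2 - 2 * l * (pmf (poisson_pmf l) k * real k) + l^2 * pmf (poisson_pmf l) k)"
    by (auto simp: fun_eq_iff power2_eq_square algebra_simps)
  moreover have "\<dots> sums ((l^2 + l) - 2 * l * l + l^2 * 1)"
    by (intro sums_add sums_diff sums_mult poisson_sums l)
  ultimately have "(\<lambda>k. pmf (poisson_pmf l) k * (real k - l)^2) sums l"
    by (simp add: power2_eq_square algebra_simps)
  then show ?thesis unfolding poisson_mean[OF l]
    by (rule expectation_pmf_sums(2)) simp
qed

lemma poisson_var':
  fixes l :: real assumes l: "l > 0"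
  shows "measure_pmf.expectation (poisson_pmf l) (\<lambda>x. (real x - l)^2) = l"
  using poisson_var[OF l] poisson_mean[OF l] by simp

lemma poisson_conc_eq:
  fixes l :: real assumes l: "l > 0"
  shows "poisson_conc l = (\<Sum>k\<in>{k. \<bar>real k - l\<bar> < sqrt l}. pmf (poisson_pmf l) k)"
    and "finite {k. \<bar>real k - l\<bar> < sqrt l}"
proof -
  have "{k. \<bar>real k - l\<bar> < sqrt l} \<subseteq> {..nat \<lceil>l + sqrt l\<rceil>}"
    by (auto, linarith)
  then show f: "finite {k. \<bar>real k - l\<bar> < sqrt l}" by (rule finite_subset) auto
  show "poisson_conc l = (\<Sum>k\<in>{k. \<bar>real k - l\<bar> < sqrt l}. pmf (poisson_pmf l) k)"
    unfolding poisson_conc_def poisson_mean[OF l] poisson_var'[OF l]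
    by (rule measure_measure_pmf_finite[OF f])
qed


lemma exp_le_num:
  fixes x u E :: real and q m :: nat
  assumes "exp 1 \<le> u" "0 \<le> E" "x * real q = real m" "q > 0" "u ^ m \<le> E ^ q"
  shows "exp x \<le> E"
proof -
  have "exp x ^ q = exp (real q * x)" by (simp add: exp_of_nat_mult)
  also have "\<dots> = exp (real m * 1)" using assms(3) by (simp add: mult.commute)
  also have "\<dots> = exp 1 ^ m" by (rule exp_of_nat_mult)
  also have "\<dots> \<le> u ^ m" using assms(1) by (intro power_mono) auto
  finally have "exp x ^ q \<le> E ^ q" using assms(5) by simp
  then show ?thesis using power_mono_iff[of "exp x" E q] assms by simp
qed

lemma e_le: "exp (1::real) \<le> 271829 / 100000"
  using e_approx_32 by (simp add: abs_if split: if_splits)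

lemma sqrt_mono_diff:
  fixes l d :: real assumes "1 \<le> l" "l \<le> d"
  shows "l - sqrt l \<le> d - sqrt d"
proof -
  have "sqrt l \<le> sqrt d" using assms by simp
  moreover have "d - l = (sqrt d - sqrt l) * (sqrt d + sqrt l)"
    using assms by (simp add: algebra_simps)
  moreover have "sqrt d + sqrt l \<ge> 1"
  proof -
    have "1 \<le> sqrt l" using assms by simp
    moreover have "0 \<le> sqrt d" using assms by simp
    ultimately show ?thesis by linarith
  qed
  ultimately have "(sqrt d - sqrt l) * 1 \<le> d - l"
    by (metis diff_ge_0_iff_ge mult_left_mono)
  then have "d - l \<ge> sqrt d - sqrt l" by simp
  then show ?thesis by simp
qed

lemma piece:
  fixes l c d s s' E :: real and lo hi :: nat
  assumes cl: "c \<le> l" and ld: "l \<le> d" and c1: "1 \<le> c" and s: "0 \<le> s" "s^2 \<le> c"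
    and s': "0 \<le> s'" "s'^2 \<le> d" and lo: "d - s' < real lo" and hi: "real hi < c + s"
    and E: "E \<le> (\<Sum>k=lo..hi. c^k / fact k)" and ex: "exp (d - 1) \<le> E"
  shows "exp (-1) \<le> poisson_conc l"
proof -
  have l0: "l > 0" using cl c1 by simp
  have ss: "s \<le> sqrt c" using s real_le_rsqrt by blast
  have ss': "s' \<le> sqrt d" using s' real_le_rsqrt by blast
  have sub: "{lo..hi} \<subseteq> {k. \<bar>real k - l\<bar> < sqrt l}"
  proof
    fix k assume k: "k \<in> {lo..hi}"
    have "l - sqrt l \<le> d - sqrt d" using sqrt_mono_diff[of l d] cl c1 ld by simp
    moreover have "sqrt c \<le> sqrt l" using cl by simp
    moreover have "real lo \<le> real k" "real k \<le> real hi" using k by auto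
    ultimately show "k \<in> {k. \<bar>real k - l\<bar> < sqrt l}"
      using lo hi ss ss' cl unfolding mem_Collect_eq abs_less_iff by linarith
  qed
  have "(\<Sum>k=lo..hi. pmf (poisson_pmf l) k) \<le> poisson_conc l"
    unfolding poisson_conc_eq[OF l0]
    by (rule sum_mono2[OF poisson_conc_eq(2)[OF l0] sub]) simp
  moreover have "(\<Sum>k=lo..hi. pmf (poisson_pmf l) k) = exp (-l) * (\<Sum>k=lo..hi. l^k / fact k)"
    using l0 by (simp add: sum_distrib_left mult_ac)
  moreover have "(\<Sum>k=lo..hi. c^k / fact k) \<le> (\<Sum>k=lo..hi. l^k / fact k)"
    using cl c1 by (intro sum_mono divide_right_mono power_mono) auto
  moreover have "exp (-d) \<le> exp (-l)" using ld by simp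
  moreover have "exp (-1) = exp (-d) * exp (d - 1)" by (simp flip: exp_add)
  ultimately show ?thesis
  proof -
    assume h: "(\<Sum>k=lo..hi. pmf (poisson_pmf l) k) \<le> poisson_conc l"
      "(\<Sum>k=lo..hi. pmf (poisson_pmf l) k) = exp (-l) * (\<Sum>k=lo..hi. l^k / fact k)"
      "(\<Sum>k=lo..hi. c^k / fact k) \<le> (\<Sum>k=lo..hi. l^k / fact k)"
      "exp (-d) \<le> exp (-l)" "exp (-1) = exp (-d) * exp (d - 1)"
    have E0: "0 \<le> E" using ex exp_ge_zero[of "d - 1"] by linarith
    have "exp (-1) = exp (-d) * exp (d - 1)" by (rule h(5))
    also have "\<dots> \<le> exp (-d) * E" using ex by (intro mult_left_mono) auto
    also have "\<dots> \<le> exp (-l) * (\<Sum>k=lo..hi. l^k / fact k)"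
      using h(3,4) E E0 by (intro mult_mono) auto
    also have "\<dots> \<le> poisson_conc l" using h(1,2) by simp
    finally show ?thesis .
  qed
qed

lemma piece1:
  fixes l :: real assumes "1 < l" "l \<le> 5/4"
  shows "exp (-1) \<le> poisson_conc l"
proof -
  have l0: "l > 0" using assms by simp
  have sq: "1 < sqrt l" using assms by simp
  have sub: "{1..2} \<subseteq> {k. \<bar>real k - l\<bar> < sqrt l}"
  proof
    fix k :: nat assume k: "k \<in> {1..2}"
    then have "k = 1 \<or> k = 2" by auto
    then have "real k = 1 \<or> real k = 2" by auto
    then have "real k - l < sqrt l \<and> l - real k < sqrt l" using sq assms by linarith
    then show "k \<in> {k. \<bar>real k - l\<bar> < sqrt l}" by auto
  qed
  have "(\<Sum>k=1..2. pmf (poisson_pmf l) k) \<le> poisson_conc l"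
    unfolding poisson_conc_eq[OF l0]
    by (rule sum_mono2[OF poisson_conc_eq(2)[OF l0] sub]) simp
  moreover have "(\<Sum>k=1..2. pmf (poisson_pmf l) k) = exp (-l) * (l + l^2/2)"
    using l0 by (simp add: numeral_2_eq_2 algebra_simps)
  moreover have "3/2 \<le> l + l^2/2" using assms one_le_power[of l 2] by linarith
  moreover have "exp (l - 1) \<le> exp (1/4)" using assms by simp
  moreover have "exp (1/4 :: real) \<le> 3/2"
    by (rule exp_le_num[OF e_le, of "3/2" "1/4" 4 1]) (simp_all add: power_divide)
  moreover have "exp (-1) = exp (-l) * exp (l - 1)" by (simp flip: exp_add)
  ultimately show ?thesis
  proof -
    assume h: "(\<Sum>k=1..2. pmf (poisson_pmf l) k) \<le> poisson_conc l"
      "(\<Sum>k=1..2. pmf (poisson_pmf l) k) = exp (-l) * (l + l^2/2)"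
      "3/2 \<le> l + l^2/2" "exp (l - 1) \<le> exp (1/4)" "exp (1/4 :: real) \<le> 3/2"
      "exp (-1) = exp (-l) * exp (l - 1)"
    have "exp (-1) = exp (-l) * exp (l - 1)" by (rule h(6))
    also have "\<dots> \<le> exp (-l) * (l + l^2/2)"
    proof (rule mult_left_mono)
      show "exp (l - 1) \<le> l + l^2/2" using h(3,4,5) by linarith
    qed simp
    also have "\<dots> \<le> poisson_conc l" using h(1,2) by simp
    finally show ?thesis .
  qed
qed


lemma piece_0:
  assumes "(5/4::real) \<le> l" "l \<le> (3/2::real)"
  shows "exp (-1) \<le> poisson_conc l"
proof (rule piece[OF assms, of "(559/500::real)" "(153/125::real)" 1 2 "(2539/1250::real)"])
  show "exp ((3/2::real) - 1) \<le> (2539/1250::real)"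
    by (rule exp_le_num[OF e_le, of _ _ 4 2]) (simp_all add: power_divide)
qed (simp_all add: power_divide numeral_eq_Suc fact_Suc)

lemma piece_1:
  assumes "(3/2::real) \<le> l" "l \<le> (7/4::real)"
  shows "exp (-1) \<le> poisson_conc l"
proof (rule piece[OF assms, of "(153/125::real)" "(661/500::real)" 1 2 "(21/8::real)"])
  show "exp ((7/4::real) - 1) \<le> (21/8::real)"
    by (rule exp_le_num[OF e_le, of _ _ 4 3]) (simp_all add: power_divide)
qed (simp_all add: power_divide numeral_eq_Suc fact_Suc)

lemma piece_2:
  assumes "(7/4::real) \<le> l" "l \<le> (9/4::real)"
  shows "exp (-1) \<le> poisson_conc l"
proof (rule piece[OF assms, of "(661/500::real)" "(3/2::real)" 1 3 "(2609/625::real)"])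
  show "exp ((9/4::real) - 1) \<le> (2609/625::real)"
    by (rule exp_le_num[OF e_le, of _ _ 4 5]) (simp_all add: power_divide)
qed (simp_all add: power_divide numeral_eq_Suc fact_Suc)

lemma piece_3:
  assumes "(9/4::real) \<le> l" "l \<le> (5/2::real)"
  shows "exp (-1) \<le> poisson_conc l"
proof (rule piece[OF assms, of "(3/2::real)" "(1581/1000::real)" 1 3 "(16699/2500::real)"])
  show "exp ((5/2::real) - 1) \<le> (16699/2500::real)"
    by (rule exp_le_num[OF e_le, of _ _ 4 6]) (simp_all add: power_divide)
qed (simp_all add: power_divide numeral_eq_Suc fact_Suc)

lemma piece_4:
  assumes "(5/2::real) \<le> l" "l \<le> (11/4::real)"
  shows "exp (-1) \<le> poisson_conc l"
proof (rule piece[OF assms, of "(1581/1000::real)" "(829/500::real)" 2 4 "(73567/10000::real)"])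
  show "exp ((11/4::real) - 1) \<le> (73567/10000::real)"
    by (rule exp_le_num[OF e_le, of _ _ 4 7]) (simp_all add: power_divide)
qed (simp_all add: power_divide numeral_eq_Suc fact_Suc)

lemma piece_5:
  assumes "(11/4::real) \<le> l" "l \<le> (13/4::real)"
  shows "exp (-1) \<le> poisson_conc l"
proof (rule piece[OF assms, of "(829/500::real)" "(901/500::real)" 2 4 "(96303/10000::real)"])
  show "exp ((13/4::real) - 1) \<le> (96303/10000::real)"
    by (rule exp_le_num[OF e_le, of _ _ 4 9]) (simp_all add: power_divide)
qed (simp_all add: power_divide numeral_eq_Suc fact_Suc)

lemma piece_6:
  assumes "(13/4::real) \<le> l" "l \<le> (15/4::real)"
  shows "exp (-1) \<le> poisson_conc l"
proof (rule piece[OF assms, of "(901/500::real)" "(242/125::real)" 2 5 "(186727/10000::real)"])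
  show "exp ((15/4::real) - 1) \<le> (186727/10000::real)"
    by (rule exp_le_num[OF e_le, of _ _ 4 11]) (simp_all add: power_divide)
qed (simp_all add: power_divide numeral_eq_Suc fact_Suc)

lemma piece_7:
  assumes "(15/4::real) \<le> l" "l \<le> (4::real)"
  shows "exp (-1) \<le> poisson_conc l"
proof (rule piece[OF assms, of "(242/125::real)" "(2::real)" 3 5 "(116043/5000::real)"])
  show "exp ((4::real) - 1) \<le> (116043/5000::real)"
    by (rule exp_le_num[OF e_le, of _ _ 4 12]) (simp_all add: power_divide)
qed (simp_all add: power_divide numeral_eq_Suc fact_Suc)

lemma piece_8:
  assumes "(4::real) \<le> l" "l \<le> (17/4::real)"
  shows "exp (-1) \<le> poisson_conc l"
proof (rule piece[OF assms, of "(2::real)" "(2061/1000::real)" 3 5 "(149333/5000::real)"])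
  show "exp ((17/4::real) - 1) \<le> (149333/5000::real)"
    by (rule exp_le_num[OF e_le, of _ _ 4 13]) (simp_all add: power_divide)
qed (simp_all add: power_divide numeral_eq_Suc fact_Suc)

lemma piece_9:
  assumes "(17/4::real) \<le> l" "l \<le> (19/4::real)"
  shows "exp (-1) \<le> poisson_conc l"
proof (rule piece[OF assms, of "(2061/1000::real)" "(2179/1000::real)" 3 6 "(115319/2500::real)"])
  show "exp ((19/4::real) - 1) \<le> (115319/2500::real)"
    by (rule exp_le_num[OF e_le, of _ _ 4 15]) (simp_all add: power_divide)
qed (simp_all add: power_divide numeral_eq_Suc fact_Suc)

lemma piece_10:
  assumes "(19/4::real) \<le> l" "l \<le> (21/4::real)"
  shows "exp (-1) \<le> poisson_conc l"
proof (rule piece[OF assms, of "(2179/1000::real)" "(2291/1000::real)" 3 6 "(751761/10000::real)"])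
  show "exp ((21/4::real) - 1) \<le> (751761/10000::real)"
    by (rule exp_le_num[OF e_le, of _ _ 4 17]) (simp_all add: power_divide)
qed (simp_all add: power_divide numeral_eq_Suc fact_Suc)

lemma piece_11:
  assumes "(21/4::real) \<le> l" "l \<le> (23/4::real)"
  shows "exp (-1) \<le> poisson_conc l"
proof (rule piece[OF assms, of "(2291/1000::real)" "(2397/1000::real)" 4 7 "(289459/2500::real)"])
  show "exp ((23/4::real) - 1) \<le> (289459/2500::real)"
    by (rule exp_le_num[OF e_le, of _ _ 4 19]) (simp_all add: power_divide)
qed (simp_all add: power_divide numeral_eq_Suc fact_Suc)

lemma piece_12:
  assumes "(23/4::real) \<le> l" "l \<le> (6::real)"
  shows "exp (-1) \<le> poisson_conc l"
proof (rule piece[OF assms, of "(2397/1000::real)" "(2449/1000::real)" 4 8 "(1094959/5000::real)"])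
  show "exp ((6::real) - 1) \<le> (1094959/5000::real)"
    by (rule exp_le_num[OF e_le, of _ _ 4 20]) (simp_all add: power_divide)
qed (simp_all add: power_divide numeral_eq_Suc fact_Suc)

lemma pieces_mid:
  assumes "5/4 \<le> l" "l \<le> 6"
  shows "exp (-1) \<le> poisson_conc l"
proof -
  have h: "(5/4::real) \<le> l" using assms by simp
  show ?thesis
  proof (cases "l \<le> (3/2::real)")
    case True then show ?thesis using h assms by (intro piece_0) auto
  next
    case False then have h: "(3/2::real) \<le> l" by simp
    show ?thesis
    proof (cases "l \<le> (7/4::real)")
      case True then show ?thesis using h assms by (intro piece_1) auto
    next
      case False then have h: "(7/4::real) \<le> l" by simp
      show ?thesis
      proof (cases "l \<le> (9/4::real)")
        case True then show ?thesis using h assms by (intro piece_2) auto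
      next
        case False then have h: "(9/4::real) \<le> l" by simp
        show ?thesis
        proof (cases "l \<le> (5/2::real)")
          case True then show ?thesis using h assms by (intro piece_3) auto
        next
          case False then have h: "(5/2::real) \<le> l" by simp
          show ?thesis
          proof (cases "l \<le> (11/4::real)")
            case True then show ?thesis using h assms by (intro piece_4) auto
          next
            case False then have h: "(11/4::real) \<le> l" by simp
            show ?thesis
            proof (cases "l \<le> (13/4::real)")
              case True then show ?thesis using h assms by (intro piece_5) auto
            next
              case False then have h: "(13/4::real) \<le> l" by simp
              show ?thesis
              proof (cases "l \<le> (15/4::real)")
                case True then show ?thesis using h assms by (intro piece_6) auto
              next
                case False then have h: "(15/4::real) \<le> l" by simp
                show ?thesis
                proof (cases "l \<le> (4::real)")
                  case True then show ?thesis using h assms by (intro piece_7) auto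
                next
                  case False then have h: "(4::real) \<le> l" by simp
                  show ?thesis
                  proof (cases "l \<le> (17/4::real)")
                    case True then show ?thesis using h assms by (intro piece_8) auto
                  next
                    case False then have h: "(17/4::real) \<le> l" by simp
                    show ?thesis
                    proof (cases "l \<le> (19/4::real)")
                      case True then show ?thesis using h assms by (intro piece_9) auto
                    next
                      case False then have h: "(19/4::real) \<le> l" by simp
                      show ?thesis
                      proof (cases "l \<le> (21/4::real)")
                        case True then show ?thesis using h assms by (intro piece_10) auto
                      next
                        case False then have h: "(21/4::real) \<le> l" by simp
                        show ?thesis
                        proof (cases "l \<le> (23/4::real)")
                          case True then show ?thesis using h assms by (intro piece_11) auto
                        next
                          case False then have h: "(23/4::real) \<le> l" by simp
                          show ?thesis using h assms by (intro piece_12) auto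
                        qed
                      qed
                    qed
                  qed
                qed
              qed
            qed
          qed
        qed
      qed
    qed
  qed
qed


context
  fixes l :: real assumes l6: "6 \<le> l"
begin

private lemma l0: "l > 0" using l6 by simp

private abbreviation "p \<equiv> pmf (poisson_pmf l)"

private lemma p_Suc: "p (Suc k) = l / real (Suc k) * p k"
  using l0 by (simp add: field_simps del: of_nat_Suc)

private lemma p_nn: "p k \<ge> 0" by simp

private lemma mono_up: "i \<le> j \<Longrightarrow> real j \<le> l \<Longrightarrow> p i \<le> p j"
proof (induction j)
  case 0 then show ?case by simp
next
  case (Suc j)
  show ?case
  proof (cases "i = Suc j")
    case False
    then have "p i \<le> p j" using Suc by simp
    moreover have "p j \<le> p (Suc j)"
    proof -
      have "1 \<le> l / real (Suc j)" using Suc.prems by simp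
      then have "1 * p j \<le> l / real (Suc j) * p j" by (intro mult_right_mono) auto
      then show ?thesis by (simp only: p_Suc)
    qed
    ultimately show ?thesis by simp
  qed simp
qed

private lemma mono_down: "i \<le> j \<Longrightarrow> l \<le> real i + 1 \<Longrightarrow> p j \<le> p i"
proof (induction j)
  case 0 then show ?case by simp
next
  case (Suc j)
  show ?case
  proof (cases "i = Suc j")
    case False
    then have "p j \<le> p i" using Suc by simp
    moreover have "p (Suc j) \<le> p j"
    proof -
      have "l / real (Suc j) \<le> 1" using Suc.prems False l0 by simp
      then have "l / real (Suc j) * p j \<le> 1 * p j" by (intro mult_right_mono) auto
      then show ?thesis by (simp only: p_Suc)
    qed
    ultimately show ?thesis by simp
  qed simp
qed

private lemma sqrt_ge: "sqrt l \<ge> 2449/1000"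
proof -
  have "(2449/1000)^2 \<le> l" using l6 by (simp add: power_divide)
  then show ?thesis using real_le_rsqrt by blast
qed

private lemma lower_tail: "1 \<le> m \<Longrightarrow> real (m - 1) \<le> l - sqrt l \<Longrightarrow> (\<Sum>k<m. p k) \<le> sqrt l * p (m - 1)"
proof (induction m)
  case 0 then show ?case by simp
next
  case (Suc m)
  show ?case
  proof (cases m)
    case 0
    have "1 \<le> sqrt l" using sqrt_ge by linarith
    then have "1 * p 0 \<le> sqrt l * p 0" by (intro mult_right_mono) auto
    then show ?thesis using 0 by simp
  next
    case (Suc m')
    have IH: "(\<Sum>k<m. p k) \<le> sqrt l * p (m - 1)" using Suc.IH Suc.prems \<open>m = Suc m'\<close> by simp
    have sl: "sqrt l > 0" using l0 by simp
    have pm: "p m' = real m / l * p m"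
      using p_Suc[of m'] l0 \<open>m = Suc m'\<close> by (simp del: of_nat_Suc)
    have "real m / l \<le> 1 - 1 / sqrt l"
    proof -
      have "real m \<le> l - sqrt l" using Suc.prems by simp
      then have "real m / l \<le> (l - sqrt l) / l" using l0 by (simp add: divide_right_mono)
      also have "(l - sqrt l) / l = 1 - 1 / sqrt l"
        using l0 sl by (simp add: field_simps)
      finally show ?thesis .
    qed
    then have "p m' \<le> (1 - 1 / sqrt l) * p m" unfolding pm by (intro mult_right_mono) auto
    then have "sqrt l * p m' \<le> sqrt l * ((1 - 1 / sqrt l) * p m)" by (rule mult_left_mono) (use sl in auto)
    also have "\<dots> = sqrt l * p m - p m" using sl by (simp add: field_simps)
    finally have "sqrt l * p m' \<le> sqrt l * p m - p m" .
    then show ?thesis using IH \<open>m = Suc m'\<close> by simp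
  qed
qed

private lemma upper_tail:
  assumes b: "l + sqrt l \<le> real b + 1"
  shows "summable (\<lambda>j. p (j + Suc b))" "(\<Sum>j. p (j + Suc b)) \<le> sqrt l * p b"
proof -
  have sp: "summable p" using poisson_sums(1)[OF l0] by (rule sums_summable)
  show su: "summable (\<lambda>j. p (j + Suc b))" using sp by (rule summable_ignore_initial_segment)
  have sb: "summable (\<lambda>j. p (j + b))" using sp by (rule summable_ignore_initial_segment)
  have sl: "sqrt l > 0" using l0 by simp
  define r where "r = l / (l + sqrt l)"
  have "l < l + sqrt l" using sl by simp
  moreover have pos: "0 < l + sqrt l" using sl l0 by linarith
  ultimately have r0: "0 \<le> r" "r < 1" using l0 sl divide_less_eq_1_pos[OF pos, of l] unfolding r_def by auto
  have le: "p (j + Suc b) \<le> r * p (j + b)" for j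
  proof -
    have eq: "p (j + Suc b) = l / real (Suc (j + b)) * p (j + b)" using p_Suc[of "j+b"] by simp
    have "l / real (Suc (j + b)) \<le> r" unfolding r_def
    proof (rule divide_left_mono)
      show "l + sqrt l \<le> real (Suc (j + b))" using b by simp
      show "0 \<le> l" using l0 by simp
      show "0 < real (Suc (j + b)) * (l + sqrt l)" using pos by simp
    qed
    then have "l / real (Suc (j + b)) * p (j + b) \<le> r * p (j + b)" by (rule mult_right_mono) simp
    then show ?thesis unfolding eq .
  qed
  have "(\<Sum>j. p (j + Suc b)) \<le> (\<Sum>j. r * p (j + b))"
    using le su sb by (intro suminf_le summable_mult) auto
  also have "\<dots> = r * (\<Sum>j. p (j + b))" using sb by (rule suminf_mult)
  also have "(\<Sum>j. p (j + b)) = p b + (\<Sum>j. p (j + Suc b))"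
    using suminf_split_head[OF sb] by simp
  finally have "(1 - r) * (\<Sum>j. p (j + Suc b)) \<le> r * p b" by (simp add: algebra_simps)
  moreover have "r / (1 - r) = sqrt l"
  proof -
    have "1 - r = sqrt l / (l + sqrt l)" using pos by (simp add: r_def field_simps)
    then have "r / (1 - r) = l / sqrt l" using pos sl by (simp add: r_def)
    also have "\<dots> = sqrt l" using l0 by (simp add: real_div_sqrt)
    finally show ?thesis .
  qed
  ultimately show "(\<Sum>j. p (j + Suc b)) \<le> sqrt l * p b"
  proof -
    assume h: "(1 - r) * (\<Sum>j. p (j + Suc b)) \<le> r * p b" "r / (1 - r) = sqrt l"
    have "(\<Sum>j. p (j + Suc b)) \<le> r * p b / (1 - r)"
      using h(1) r0 by (simp add: pos_le_divide_eq mult.commute)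
    also have "\<dots> = r / (1 - r) * p b" by simp
    finally show ?thesis using h(2) by simp
  qed
qed

lemma poisson_large: "exp (-1) \<le> poisson_conc l"
proof -
  have sl: "sqrt l \<ge> 2449/1000" by (rule sqrt_ge)
  have sll: "sqrt l * sqrt l = l" using l0 by simp
  define a where "a = nat \<lfloor>l - sqrt l\<rfloor> + 1"
  define b where "b = nat \<lceil>l + sqrt l\<rceil> - 1"
  define n where "n = nat \<lfloor>l\<rfloor>"
  have "1 * sqrt l \<le> sqrt l * sqrt l" using sl by (intro mult_right_mono) linarith+
  then have lsl: "l - sqrt l \<ge> 0" using sll by simp
  have fa: "real (a - 1) = of_int \<lfloor>l - sqrt l\<rfloor>" "real a = of_int \<lfloor>l - sqrt l\<rfloor> + 1"
    unfolding a_def using lsl by auto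
  have "l - sqrt l < of_int \<lfloor>l - sqrt l\<rfloor> + 1" by simp
  then have a1: "real (a - 1) \<le> l - sqrt l" "l - sqrt l < real a" "1 \<le> a"
    using fa of_int_floor_le[of "l - sqrt l"] by (linarith, linarith, simp add: a_def)
  have "\<lceil>l + sqrt l\<rceil> \<ge> 1" using l0 sl by linarith
  then have "int b = \<lceil>l + sqrt l\<rceil> - 1" unfolding b_def by linarith
  then have fb: "real b = of_int \<lceil>l + sqrt l\<rceil> - 1" by (metis of_int_diff of_int_of_nat_eq of_int_1)
  have b1: "real b < l + sqrt l" "l + sqrt l \<le> real b + 1"
    using fb ceiling_correct[of "l + sqrt l"] by auto
  have fn: "real n = of_int \<lfloor>l\<rfloor>" unfolding n_def using l0 by simp
  have "l < of_int \<lfloor>l\<rfloor> + 1" by simp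
  then have n1: "real n \<le> l" "l < real n + 1" using fn of_int_floor_le[of l] by linarith+
  have e1: "exp 1 \<ge> (2718/1000::real)" using e_approx_32 by (simp add: abs_if split: if_splits)
  define K where "K = exp 1 - (1::real)"
  have K0: "K \<ge> 0" using e1 by (simp add: K_def)
  have h1: "0 \<le> (exp 1 - 2) * (sqrt l - 2449/1000)" using e1 sl by (intro mult_nonneg_nonneg) auto
  have h2: "K * (sqrt l - 1) - sqrt l = (exp 1 - 2) * (sqrt l - 2449/1000) + (1449/1000 * exp 1 - 3898/1000)"
    by (simp add: K_def field_simps)
  have key: "sqrt l \<le> K * (sqrt l - 1)" using h1 h2 e1 by linarith
  have "real a < real (Suc n)" using a1 n1 sl by simp
  then have an: "a \<le> n" by (simp only: of_nat_less_iff less_Suc_eq_le)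
  have "real n < real b" using n1 b1 sl by simp
  then have nb: "n < b" by (simp only: of_nat_less_iff)
  have ca: "sqrt l \<le> K * real (Suc n - a)"
  proof -
    have "real (Suc n - a) = real n + 1 - real a" using an by (simp add: of_nat_diff)
    then have "sqrt l - 1 \<le> real (Suc n - a)" using a1 n1 by simp
    then have "K * (sqrt l - 1) \<le> K * real (Suc n - a)" using K0 by (rule mult_left_mono)
    then show ?thesis using key by simp
  qed
  have cb: "sqrt l \<le> K * real (b - n)"
  proof -
    have "real (b - n) = real b - real n" using nb by (simp add: of_nat_diff)
    then have "sqrt l - 1 \<le> real (b - n)" using b1 n1 by simp
    then have "K * (sqrt l - 1) \<le> K * real (b - n)" using K0 by (rule mult_left_mono)
    then show ?thesis using key by simp
  qed
  define S where "S = (\<Sum>k=a..b. p k)"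
  have S_split: "S = (\<Sum>k=a..n. p k) + (\<Sum>k=Suc n..b. p k)"
  proof -
    have e: "{a..b} = {a..n} \<union> {Suc n..b}" using an nb by auto
    have "(\<Sum>i\<in>{a..b}. p i) = (\<Sum>i\<in>{a..n} \<union> {Suc n..b}. p i)" by (simp only: e)
    also have "\<dots> = (\<Sum>i\<in>{a..n}. p i) + (\<Sum>i\<in>{Suc n..b}. p i)" by (rule sum.union_disjoint) auto
    finally show ?thesis unfolding S_def .
  qed
  have S1: "real (Suc n - a) * p a \<le> (\<Sum>k=a..n. p k)"
  proof -
    have "(\<Sum>k=a..n. p a) \<le> (\<Sum>k=a..n. p k)"
    proof (rule sum_mono)
      fix k assume k: "k \<in> {a..n}"
      then have "real k \<le> real n" by simp
      then show "p a \<le> p k" using k n1 by (intro mono_up) auto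
    qed
    then show ?thesis by simp
  qed
  have S2: "real (b - n) * p b \<le> (\<Sum>k=Suc n..b. p k)"
  proof -
    have "(\<Sum>k=Suc n..b. p b) \<le> (\<Sum>k=Suc n..b. p k)"
    proof (rule sum_mono)
      fix k assume "k \<in> {Suc n..b}"
      then have "real (Suc n) \<le> real k" "k \<le> b" by auto
      then show "p b \<le> p k" using n1 by (intro mono_down) auto
    qed
    then show ?thesis by simp
  qed
  have KS: "sqrt l * p a + sqrt l * p b \<le> K * S"
  proof -
    have "sqrt l * p a \<le> K * real (Suc n - a) * p a" using ca by (intro mult_right_mono) auto
    moreover have "sqrt l * p b \<le> K * real (b - n) * p b" using cb by (intro mult_right_mono) auto
    moreover have "K * S = K * (\<Sum>k=a..n. p k) + K * (\<Sum>k=Suc n..b. p k)"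
      unfolding S_split by (simp add: algebra_simps)
    moreover have "K * (real (Suc n - a) * p a) \<le> K * (\<Sum>k=a..n. p k)" using S1 K0 by (rule mult_left_mono)
    moreover have "K * (real (b - n) * p b) \<le> K * (\<Sum>k=Suc n..b. p k)" using S2 K0 by (rule mult_left_mono)
    ultimately show ?thesis by (simp add: mult.assoc)
  qed
  have Tm: "(\<Sum>k<a. p k) \<le> sqrt l * p a"
  proof -
    have "(\<Sum>k<a. p k) \<le> sqrt l * p (a - 1)" using a1 by (intro lower_tail) auto
    also have "\<dots> \<le> sqrt l * p a" using a1 n1 an
      by (intro mult_left_mono mono_up) auto
    finally show ?thesis .
  qed
  have Tp: "(\<Sum>j. p (j + Suc b)) \<le> sqrt l * p b" using upper_tail b1 by blast
  have sp: "summable p" using poisson_sums(1)[OF l0] by (rule sums_summable)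
  have "1 = (\<Sum>j. p j)" using poisson_sums(1)[OF l0] by (simp add: sums_iff)
  also have "\<dots> = (\<Sum>j. p (j + Suc b)) + (\<Sum>i<Suc b. p i)" by (rule suminf_split_initial_segment[OF sp])
  also have "(\<Sum>i<Suc b. p i) = (\<Sum>i<a. p i) + S"
  proof -
    have e: "{..<Suc b} = {..<a} \<union> {a..b}" using an nb by auto
    have "(\<Sum>i<Suc b. p i) = (\<Sum>i\<in>{..<a} \<union> {a..b}. p i)" by (simp only: e)
    also have "\<dots> = (\<Sum>i<a. p i) + (\<Sum>i\<in>{a..b}. p i)" by (rule sum.union_disjoint) auto
    finally show ?thesis unfolding S_def .
  qed
  finally have "1 \<le> K * S + S" using Tm Tp KS by linarith
  then have "1 \<le> exp 1 * S" by (simp add: K_def algebra_simps)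
  then have eS: "exp (-1) \<le> S" by (simp add: exp_minus field_simps)
  have sub: "{a..b} \<subseteq> {k. \<bar>real k - l\<bar> < sqrt l}"
  proof
    fix k assume "k \<in> {a..b}"
    then have "real a \<le> real k" "real k \<le> real b" by auto
    then show "k \<in> {k. \<bar>real k - l\<bar> < sqrt l}" using a1 b1 by auto
  qed
  have "S \<le> poisson_conc l"
    unfolding poisson_conc_eq[OF l0] S_def
    by (rule sum_mono2[OF poisson_conc_eq(2)[OF l0] sub]) simp
  then show ?thesis using eS by simp
qed

end


lemma poisson_conv:
  fixes a b :: real assumes a: "a > 0" and b: "b > 0"
  shows "map_pmf (\<lambda>(x,y). x + y) (pair_pmf (poisson_pmf a) (poisson_pmf b)) = poisson_pmf (a + b)"
proof (rule pmf_eqI)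
  fix w :: nat
  have fin: "finite ((\<lambda>i. (i, w - i)) ` {..w})" by simp
  have pre: "(\<lambda>(x,y). x + y) -` {w} = (\<lambda>i. (i, w - i)) ` {..w}" by auto
  have "pmf (map_pmf (\<lambda>(x,y). x + y) (pair_pmf (poisson_pmf a) (poisson_pmf b))) w
      = measure (pair_pmf (poisson_pmf a) (poisson_pmf b)) ((\<lambda>i. (i, w - i)) ` {..w})"
    by (simp add: pmf_map pre)
  also have "\<dots> = (\<Sum>z\<in>(\<lambda>i. (i, w - i)) ` {..w}. pmf (pair_pmf (poisson_pmf a) (poisson_pmf b)) z)"
    by (rule measure_measure_pmf_finite[OF fin])
  also have "\<dots> = (\<Sum>i\<le>w. pmf (poisson_pmf a) i * pmf (poisson_pmf b) (w - i))"
    by (subst sum.reindex) (auto simp: inj_on_def pmf_pair)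
  also have "\<dots> = (\<Sum>i\<le>w. (real (w choose i) * a ^ i * b ^ (w - i)) / fact w * exp (-(a+b)))"
  proof (rule sum.cong[OF refl])
    fix i assume i: "i \<in> {..w}"
    then have "real (w choose i) = fact w / (fact i * fact (w - i))"
      by (simp add: binomial_fact)
    then show "pmf (poisson_pmf a) i * pmf (poisson_pmf b) (w - i) =
      (real (w choose i) * a ^ i * b ^ (w - i)) / fact w * exp (-(a+b))"
      using a b by (simp add: field_simps exp_add[symmetric] exp_diff)
  qed
  also have "\<dots> = (a + b) ^ w / fact w * exp (-(a+b))"
  proof -
    have "(\<Sum>i\<le>w. (real (w choose i) * a ^ i * b ^ (w - i)) / fact w * exp (-(a+b)))
       = (\<Sum>i\<le>w. real (w choose i) * a ^ i * b ^ (w - i)) / fact w * exp (-(a+b))"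
      by (simp add: sum_distrib_right sum_divide_distrib)
    also have "(\<Sum>i\<le>w. real (w choose i) * a ^ i * b ^ (w - i)) = (a + b) ^ w"
      by (simp add: binomial_ring)
    finally show ?thesis .
  qed
  also have "\<dots> = pmf (poisson_pmf (a + b)) w" using a b by simp
  finally show "pmf (map_pmf (\<lambda>(x,y). x + y) (pair_pmf (poisson_pmf a) (poisson_pmf b))) w = pmf (poisson_pmf (a + b)) w" .
qed


definition pnu :: "real \<Rightarrow> real measure" where
  "pnu t = distr (measure_pmf (poisson_pmf t)) borel real"

lemma pnu_prob: "prob_space (pnu t)" unfolding pnu_def
  by (rule prob_space.prob_space_distr) (auto simp: prob_space_measure_pmf)

lemma sets_pnu[simp, measurable_cong]: "sets (pnu t) = sets borel" by (simp add: pnu_def)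

lemma nn_integral_pnu:
  assumes "f \<in> borel_measurable borel"
  shows "(\<integral>\<^sup>+y. f y \<partial>pnu t) = (\<integral>\<^sup>+k. f (real k) \<partial>measure_pmf (poisson_pmf t))"
  unfolding pnu_def using assms by (subst nn_integral_distr) auto

lemma G:
  fixes t :: real assumes t: "t > 0"
  shows "f \<in> borel_measurable borel \<Longrightarrow>
    (\<integral>\<^sup>+x. f (\<Sum>i<Suc m. x i) \<partial>PiM {..<Suc m} (\<lambda>_. pnu t)) =
    (\<integral>\<^sup>+k. f (real k) \<partial>measure_pmf (poisson_pmf (real (Suc m) * t)))"
proof (induction m arbitrary: f)
  interpret P: product_sigma_finite "\<lambda>_. pnu t"
    by (simp add: product_sigma_finite_def prob_space_imp_sigma_finite pnu_prob)
  {
  case 0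
  have "(\<integral>\<^sup>+x. f (\<Sum>i<Suc 0. x i) \<partial>PiM {..<Suc 0} (\<lambda>_. pnu t)) =
        (\<integral>\<^sup>+x. f (x 0) \<partial>PiM {0::nat} (\<lambda>_. pnu t))"
    by (simp add: lessThan_Suc)
  also have "\<dots> = (\<integral>\<^sup>+y. f y \<partial>pnu t)"
    by (rule P.product_nn_integral_singleton) (use 0 in simp)
  also have "\<dots> = (\<integral>\<^sup>+k. f (real k) \<partial>measure_pmf (poisson_pmf t))"
    by (rule nn_integral_pnu[OF 0])
  finally show ?case by simp
  next
  case (Suc m)
  note fm[measurable] = Suc.prems
  define h where "h s = (\<integral>\<^sup>+y. f (s + y) \<partial>pnu t)" for s
  interpret S: sigma_finite_measure "pnu t" by (simp add: prob_space_imp_sigma_finite pnu_prob)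
  have hm: "h \<in> borel_measurable borel" unfolding h_def by measurable
  have comp: "(\<lambda>x. x i) \<in> borel_measurable (PiM I (\<lambda>_. pnu t))" if "i \<in> I" for i I
    using measurable_component_singleton[OF that, of "\<lambda>_. pnu t"]
    by (simp add: measurable_cong_sets[OF refl sets_pnu])
  have "{..<Suc (Suc m)} = insert (Suc m) {..<Suc m}" by auto
  then have "(\<integral>\<^sup>+x. f (\<Sum>i<Suc (Suc m). x i) \<partial>PiM {..<Suc (Suc m)} (\<lambda>_. pnu t)) =
      (\<integral>\<^sup>+x. f (\<Sum>i<Suc (Suc m). x i) \<partial>PiM (insert (Suc m) {..<Suc m}) (\<lambda>_. pnu t))" by simp
  also have "\<dots> = (\<integral>\<^sup>+x. (\<integral>\<^sup>+y. f (\<Sum>i<Suc (Suc m). (x(Suc m := y)) i) \<partial>pnu t) \<partial>PiM {..<Suc m} (\<lambda>_. pnu t))"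
  proof (rule P.product_nn_integral_insert)
    show "(\<lambda>x. f (\<Sum>i<Suc (Suc m). x i)) \<in> borel_measurable (PiM (insert (Suc m) {..<Suc m}) (\<lambda>_. pnu t))"
    proof (intro measurable_compose[OF _ fm] borel_measurable_sum)
      fix i assume "i \<in> {..<Suc (Suc m)}"
      then have "i \<in> insert (Suc m) {..<Suc m}" by auto
      then show "(\<lambda>x. x i) \<in> borel_measurable (PiM (insert (Suc m) {..<Suc m}) (\<lambda>_. pnu t))" by (rule comp)
    qed
  qed auto
  also have "\<dots> = (\<integral>\<^sup>+x. h (\<Sum>i<Suc m. x i) \<partial>PiM {..<Suc m} (\<lambda>_. pnu t))"
    by (rule nn_integral_cong) (simp add: h_def)
  also have "\<dots> = (\<integral>\<^sup>+k. h (real k) \<partial>measure_pmf (poisson_pmf (real (Suc m) * t)))"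
    by (rule Suc.IH[OF hm])
  also have "\<dots> = (\<integral>\<^sup>+j. \<integral>\<^sup>+k. f (real (j + k)) \<partial>measure_pmf (poisson_pmf t) \<partial>measure_pmf (poisson_pmf (real (Suc m) * t)))"
    unfolding h_def by (rule nn_integral_cong, subst nn_integral_pnu) auto
  also have "\<dots> = (\<integral>\<^sup>+z. f (real ((\<lambda>(x,y). x + y) z)) \<partial>measure_pmf (pair_pmf (poisson_pmf (real (Suc m) * t)) (poisson_pmf t)))"
    by (simp add: nn_integral_pair_pmf' case_prod_beta)
  also have "\<dots> = (\<integral>\<^sup>+w. f (real w) \<partial>measure_pmf (map_pmf (\<lambda>(x,y). x + y) (pair_pmf (poisson_pmf (real (Suc m) * t)) (poisson_pmf t))))"
    by simp
  also have "map_pmf (\<lambda>(x,y). x + y) (pair_pmf (poisson_pmf (real (Suc m) * t)) (poisson_pmf t)) = poisson_pmf (real (Suc (Suc m)) * t)"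
  proof -
    have pos: "0 < real (Suc m) * t" using t by simp
    have "real (Suc m) * t + t = real (Suc (Suc m)) * t" by (simp add: algebra_simps)
    then show ?thesis using poisson_conv[OF pos t] by simp
  qed
  finally show ?case .
  }
qed


lemma conc1: "poisson_conc 1 = exp (-1)"
proof -
  have e: "{k::nat. \<bar>real k - 1\<bar> < sqrt 1} = {1}"
  proof safe
    fix k :: nat assume "\<bar>real k - 1\<bar> < sqrt 1"
    then have "0 < real k" "real k < 2" by auto
    then show "k = 1" by linarith
  qed simp
  show ?thesis using poisson_conc_eq[of 1] unfolding e by simp
qed

lemma conc_lower:
  fixes l :: real assumes l: "l > 0"
  shows "exp (-1) \<le> poisson_conc l"
proof -
  consider "l < 1" | "l = 1" | "1 < l" "l \<le> 5/4" | "5/4 \<le> l" "l \<le> 6" | "6 \<le> l" by linarith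
  then show ?thesis
  proof cases
    case 1
    have s0: "0 < sqrt l" "sqrt l < 1" using l 1 by auto
    have "sqrt l * sqrt l < 1 * sqrt l" using s0 by (intro mult_strict_right_mono) auto
    then have "l < sqrt l" using l by simp
    then have mem: "0 \<in> {k::nat. \<bar>real k - l\<bar> < sqrt l}" using l by simp
    have "pmf (poisson_pmf l) 0 \<le> poisson_conc l"
      unfolding poisson_conc_eq[OF l] by (rule member_le_sum[OF mem _ poisson_conc_eq(2)[OF l]]) simp
    moreover have "pmf (poisson_pmf l) 0 = exp (-l)" using l by simp
    moreover have "exp (-1) \<le> exp (-l)" using 1 by simp
    ultimately show ?thesis by linarith
  next
    case 2 then show ?thesis using conc1 by simp
  next
    case 3 then show ?thesis by (rule piece1)
  next
    case 4 then show ?thesis by (rule pieces_mid)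
  next
    case 5 then show ?thesis by (rule poisson_large)
  qed
qed

lemma part1: "(INF l\<in>{0<..}. poisson_conc l) = poisson_conc 1"
proof (rule cInf_eq_minimum)
  show "poisson_conc 1 \<in> poisson_conc ` {0<..}" by auto
  fix x assume "x \<in> poisson_conc ` {0<..}"
  then show "poisson_conc 1 \<le> x" using conc1 conc_lower by auto
qed

lemma real_meas: "real \<in> measurable (measure_pmf p) borel" by simp

lemma sum_meas: "(\<lambda>x. \<Sum>i<n. x i) \<in> borel_measurable (PiM {..<n} (\<lambda>_. pnu t))"
proof (rule borel_measurable_sum)
  fix i assume "i \<in> {..<n}"
  then show "(\<lambda>x. x i) \<in> borel_measurable (PiM {..<n} (\<lambda>_. pnu t))"
    using measurable_component_singleton[of i "{..<n}" "\<lambda>_. pnu t"]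
    by (simp add: measurable_cong_sets[OF refl sets_pnu])
qed

lemma pnu1_div: "inf_divisible (pnu 1)"
  unfolding inf_divisible_def
proof (intro conjI allI impI)
  show "prob_space (pnu 1)" by (rule pnu_prob)
  show "sets (pnu 1) = sets borel" by simp
  fix n :: nat assume n: "n \<ge> 1"
  then obtain m where m: "n = Suc m" by (cases n) auto
  define t where "t = 1 / real n"
  have t: "t > 0" using n by (simp add: t_def)
  have "pnu 1 = distr (PiM {..<n} (\<lambda>_. pnu t)) borel (\<lambda>x. \<Sum>i<n. x i)"
  proof (rule measure_eqI)
    show "sets (pnu 1) = sets (distr (PiM {..<n} (\<lambda>_. pnu t)) borel (\<lambda>x. \<Sum>i<n. x i))" by simp
    fix A assume "A \<in> sets (pnu 1)"
    then have A[measurable]: "A \<in> sets borel" by simp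
    have "emeasure (distr (PiM {..<n} (\<lambda>_. pnu t)) borel (\<lambda>x. \<Sum>i<n. x i)) A
        = (\<integral>\<^sup>+y. indicator A y \<partial>distr (PiM {..<n} (\<lambda>_. pnu t)) borel (\<lambda>x. \<Sum>i<n. x i))"
      by (rule nn_integral_indicator[symmetric]) simp
    also have "\<dots> = (\<integral>\<^sup>+x. indicator A (\<Sum>i<n. x i) \<partial>PiM {..<n} (\<lambda>_. pnu t))"
      by (rule nn_integral_distr[OF sum_meas]) simp
    also have "\<dots> = (\<integral>\<^sup>+k. indicator A (real k) \<partial>measure_pmf (poisson_pmf (real (Suc m) * t)))"
      unfolding m by (rule G[OF t]) simp
    also have "real (Suc m) * t = 1" using m by (simp add: t_def)
    also have "(\<integral>\<^sup>+k. indicator A (real k) \<partial>measure_pmf (poisson_pmf 1)) = (\<integral>\<^sup>+y. indicator A y \<partial>pnu 1)"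
      by (rule nn_integral_pnu[symmetric]) simp
    also have "\<dots> = emeasure (pnu 1) A" by (rule nn_integral_indicator) simp
    finally show "emeasure (pnu 1) A = emeasure (distr (PiM {..<n} (\<lambda>_. pnu t)) borel (\<lambda>x. \<Sum>i<n. x i)) A" ..
  qed
  then show "\<exists>\<nu>. prob_space \<nu> \<and> sets \<nu> = sets borel \<and> pnu 1 = distr (PiM {..<n} (\<lambda>_. \<nu>)) borel (\<lambda>x. \<Sum>i<n. x i)"
    using pnu_prob by (intro exI[of _ "pnu t"]) auto
qed

lemma pnu1_int: "integrable (pnu 1) (\<lambda>x. x\<^sup>2)"
  unfolding pnu_def
  by (subst integrable_distr_eq[OF real_meas]) (auto intro: expectation_pmf_sums(1)[OF poisson_sums(3)])

lemma pnu1_mean: "integral\<^sup>L (pnu 1) (\<lambda>x. x) = 1"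
  unfolding pnu_def by (subst integral_distr[OF real_meas]) (auto simp: poisson_mean)

lemma pnu1_var: "integral\<^sup>L (pnu 1) (\<lambda>x. (x - integral\<^sup>L (pnu 1) (\<lambda>x. x))\<^sup>2) = 1"
  unfolding pnu1_mean unfolding pnu_def by (subst integral_distr[OF real_meas]) (auto simp: poisson_var')

lemma pnu1_var': "integral\<^sup>L (pnu 1) (\<lambda>x. (x - 1)\<^sup>2) = 1"
  using pnu1_var unfolding pnu1_mean .

lemma pnu1_in: "pnu 1 \<in> I0"
  unfolding I0_def using pnu1_div pnu1_int pnu1_var by simp

lemma pnu1_conc:
  "measure (pnu 1) {x. \<bar>x - integral\<^sup>L (pnu 1) (\<lambda>x. x)\<bar> < sqrt (integral\<^sup>L (pnu 1) (\<lambda>x. (x - integral\<^sup>L (pnu 1) (\<lambda>x. x))\<^sup>2))}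
   = exp (-1)"
proof -
  have e: "{x::real. \<bar>x - 1\<bar> < sqrt 1} = {0<..<2}" by auto
  have "measure (pnu 1) {0<..<2} = measure (measure_pmf (poisson_pmf 1)) (real -` {0<..<2})"
    unfolding pnu_def by (subst measure_distr[OF real_meas]) auto
  also have "real -` {0<..<(2::real)} = {k::nat. \<bar>real k - 1\<bar> < sqrt 1}" by auto
  also have "measure (measure_pmf (poisson_pmf 1)) \<dots> = poisson_conc 1"
    unfolding poisson_conc_def poisson_mean[of 1, simplified] poisson_var'[of 1, simplified] by simp
  finally show ?thesis unfolding pnu1_mean pnu1_var' e conc1 .
qed

lemma part3: "P_I0 \<le> exp (-1)"
  unfolding P_I0_def
proof (rule cINF_lower2[OF _ pnu1_in])
  show "bdd_below ((\<lambda>\<mu>. measure \<mu> {x. \<bar>x - integral\<^sup>L \<mu> (\<lambda>x. x)\<bar> < sqrt (integral\<^sup>L \<mu> (\<lambda>x. (x - integral\<^sup>L \<mu> (\<lambda>x. x))\<^sup>2))}) ` I0)"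
    by (rule bdd_belowI[of _ 0]) auto
qed (simp only: pnu1_conc)

theorem theorem4p2:
  shows "(INF l\<in>{0<..}. poisson_conc l) = poisson_conc 1 \<and>
         poisson_conc 1 = exp (-1) \<and>
         P_I0 \<le> exp (-1)"
  using part1 conc1 part3 by blast


end
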